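(* Let $I=[0,1]$ and let $H:I\to\mathbb{R}$ be a Darboux function. Then there is a countable set $D\subseteq I$ with the following property: for every continuous function $F:I\to\mathbb{R}$, if for all $a,b\in D$ and every real $t$ with $H(a)+F(a)<t<H(b)+F(b)$ there is some $c$ between $a$ and $b$ with $H(c)+F(c)=t$, then $H+F$ is Darboux.
   Context: A function $H:I\to\mathbb{R}$ is Darboux if the image under $H$ of every interval contained in $I$ is an interval. *)

theory Defs
  imports "HOL-Analysis.Analysis"
begin

definition darboux_on :: "real set \<Rightarrow> (real \<Rightarrow> real) \<Rightarrow> bool" where
  "darboux_on I H \<longleftrightarrow> (\<forall>J. is_interval J \<and> J \<subseteq> I \<longrightarrow> is_interval (H ` J))"

end

theory Submission
  imports Defs
begin

lemma darboux_near:
  fixes H :: "real \<Rightarrow> real"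
  assumes H: "darboux_on {0..1} H" and x: "x \<in> {0..1}" and y: "y \<in> {0..1}"
    and xy: "x \<noteq> y" and e: "e > 0"
  shows "\<exists>z. min x y \<le> z \<and> z \<le> max x y \<and> z \<noteq> x \<and> \<bar>H z - H x\<bar> < e"
proof (cases "\<bar>H y - H x\<bar> < e")
  case True
  then show ?thesis using xy by (intro exI[of _ y]) auto
next
  case False
  define J where "J = {min x y..max x y}"
  have "is_interval J" unfolding J_def by (simp add: is_interval_cc)
  moreover have "J \<subseteq> {0..1}" using x y unfolding J_def by auto
  ultimately have iv: "is_interval (H ` J)" using H unfolding darboux_on_def by blast
  have hx: "H x \<in> H ` J" and hy: "H y \<in> H ` J" unfolding J_def by auto
  define v where "v = (if H y > H x then H x + e/2 else H x - e/2)"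
  have "v \<in> H ` J"
  proof (cases "H y > H x")
    case True
    have "H x \<le> v" "v \<le> H y" using True False e by (auto simp: v_def)
    then show ?thesis using iv hx hy unfolding is_interval_1 by blast
  next
    case f2: False
    have "H y \<le> v" "v \<le> H x" using f2 False e by (auto simp: v_def)
    then show ?thesis using iv hx hy unfolding is_interval_1 by blast
  qed
  then obtain z where z: "z \<in> J" "H z = v" by auto
  have "H z \<noteq> H x" using z e unfolding v_def by (auto split: if_splits)
  then have "z \<noteq> x" by auto
  moreover have "\<bar>H z - H x\<bar> < e" using z e unfolding v_def by (auto split: if_splits)
  ultimately show ?thesis using z unfolding J_def by auto
qed

lemma key:
  fixes H F :: "real \<Rightarrow> real"
  assumes H: "darboux_on {0..1} H" and F: "continuous_on {0..1} F"
    and DS: "D \<subseteq> {0..1}"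
    and dense: "\<And>z e. z \<in> {0..1} \<Longrightarrow> e > 0 \<Longrightarrow> \<exists>d\<in>D. \<bar>d - z\<bar> < e \<and> \<bar>H d - H z\<bar> < e"
    and x: "x \<in> {0..1}" and y: "y \<in> {0..1}" and xy: "x \<noteq> y" and e: "e > 0"
  shows "\<exists>d\<in>D. min x y < d \<and> d < max x y \<and> \<bar>(H d + F d) - (H x + F x)\<bar> < e"
proof -
  obtain \<eta> where eta: "\<eta> > 0" "\<And>w. w \<in> {0..1} \<Longrightarrow> \<bar>w - x\<bar> < \<eta> \<Longrightarrow> \<bar>F w - F x\<bar> < e/3"
    using F x e unfolding continuous_on_iff dist_real_def
    by (metis divide_pos_pos zero_less_numeral)
  have "\<exists>y'. min x y < y' \<and> y' < max x y \<and> \<bar>y' - x\<bar> \<le> \<eta>/2"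
  proof (cases "x < y")
    case True
    then show ?thesis using eta by (intro exI[of _ "min ((x+y)/2) (x+\<eta>/2)"]) (auto simp: min_def max_def abs_if)
  next
    case False
    then show ?thesis using eta xy by (intro exI[of _ "max ((x+y)/2) (x-\<eta>/2)"]) (auto simp: min_def max_def abs_if field_simps)
  qed
  then obtain y' where y': "min x y < y'" "y' < max x y" "\<bar>y' - x\<bar> \<le> \<eta>/2" by auto
  have y'01: "y' \<in> {0..1}" using x y y' by auto
  have "x \<noteq> y'" using y' by auto
  from darboux_near[OF H x y'01 this, of "e/3"] e obtain z where
    z: "min x y' \<le> z" "z \<le> max x y'" "z \<noteq> x" "\<bar>H z - H x\<bar> < e/3" by auto
  define r where "r = min (min (e/3) (\<eta>/2)) (min \<bar>z - x\<bar> \<bar>y - z\<bar>)"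
  have zy: "z \<noteq> y" using z y' by auto
  have r: "r > 0" using e eta z zy unfolding r_def by auto
  have z01: "z \<in> {0..1}" using z x y'01 by auto
  obtain d where d: "d \<in> D" "\<bar>d - z\<bar> < r" "\<bar>H d - H z\<bar> < r" using dense[OF z01 r] by auto
  have d01: "d \<in> {0..1}" using d DS by auto
  have btw: "min x y < d \<and> d < max x y"
    using d(2) z y' unfolding r_def by (cases "x < y"; auto)
  have "\<bar>z - x\<bar> \<le> \<eta>/2" using z(1,2) y'(3) unfolding min_def max_def by (smt (verit))
  moreover have "r \<le> \<eta>/2" unfolding r_def by linarith
  ultimately have "\<bar>d - x\<bar> < \<eta>" using d(2) abs_triangle_ineq[of "d-z" "z-x"] by simp
  then have "\<bar>F d - F x\<bar> < e/3" using eta d01 by auto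
  moreover have "\<bar>H d - H z\<bar> < e/3" using d(3) unfolding r_def by auto
  ultimately have "\<bar>(H d + F d) - (H x + F x)\<bar> < e" using z(4) abs_triangle_ineq[of "H d - H z" "H z - H x"] abs_triangle_ineq[of "H d - H x" "F d - F x"] by (simp add: algebra_simps)
  then show ?thesis using btw d(1) by auto
qed

theorem mainTheorem8:
  fixes H :: "real \<Rightarrow> real"
  assumes "darboux_on {0..1} H"
  shows "\<exists>D. countable D \<and> D \<subseteq> {0..1} \<and>
    (\<forall>F. continuous_on {0..1} F \<longrightarrow>
      (\<forall>a\<in>D. \<forall>b\<in>D. \<forall>t. H a + F a < t \<and> t < H b + F b \<longrightarrow>
         (\<exists>c\<in>{min a b..max a b}. H c + F c = t)) \<longrightarrow>
      darboux_on {0..1} (\<lambda>x. H x + F x))"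
proof -
  define P where "P = (\<lambda>x. (x, H x)) ` {0..1::real}"
  obtain T where T: "countable T" "T \<subseteq> P" "P \<subseteq> closure T" using separable by blast
  define D where "D = fst ` T"
  have cD: "countable D" unfolding D_def using T by auto
  have DS: "D \<subseteq> {0..1}" unfolding D_def using T P_def by auto
  have dense: "\<exists>d\<in>D. \<bar>d - z\<bar> < e \<and> \<bar>H d - H z\<bar> < e" if z: "z \<in> {0..1}" and e: "e > 0" for z e
  proof -
    have "(z, H z) \<in> closure T" using T z unfolding P_def by auto
    then obtain p where p: "p \<in> T" "dist p (z, H z) < e" using e by (meson closure_approachable)
    then obtain d where pd: "p = (d, H d)" using T unfolding P_def by auto
    have "dist d z < e" using p pd dist_fst_le[of p "(z, H z)"] by auto
    moreover have "dist (H d) (H z) < e" using p pd dist_snd_le[of p "(z, H z)"] by auto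
    moreover have "d \<in> D" using p pd unfolding D_def by force
    ultimately show ?thesis unfolding dist_real_def by auto
  qed
  show ?thesis
  proof (intro exI[of _ D] conjI cD DS allI impI)
    fix F :: "real \<Rightarrow> real"
    assume F: "continuous_on {0..1} F"
    assume hyp: "\<forall>a\<in>D. \<forall>b\<in>D. \<forall>t. H a + F a < t \<and> t < H b + F b \<longrightarrow>
         (\<exists>c\<in>{min a b..max a b}. H c + F c = t)"
    let ?G = "\<lambda>x. H x + F x"
    show "darboux_on {0..1} ?G"
      unfolding darboux_on_def
    proof (intro allI impI)
      fix J :: "real set" assume J: "is_interval J \<and> J \<subseteq> {0..1}"
      show "is_interval (?G ` J)"
        unfolding is_interval_1
      proof (intro ballI allI impI)
        fix a b v assume a: "a \<in> ?G ` J" and b: "b \<in> ?G ` J" and v: "a \<le> v \<and> v \<le> b"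
        obtain x where x: "x \<in> J" "a = ?G x" using a by auto
        obtain y where y: "y \<in> J" "b = ?G y" using b by auto
        show "v \<in> ?G ` J"
        proof (cases "v = a \<or> v = b")
          case True then show ?thesis using a b by auto
        next
          case False
          then have av: "?G x < v" "v < ?G y" using v x y by auto
          then have xy: "x \<noteq> y" by auto
          have x01: "x \<in> {0..1}" and y01: "y \<in> {0..1}" using x y J by auto
          obtain d1 where d1: "d1 \<in> D" "min x y < d1" "d1 < max x y" "\<bar>?G d1 - ?G x\<bar> < v - ?G x"
            using key[OF assms F DS dense x01 y01 xy, of "v - ?G x"] av by auto
          obtain d2 where d2: "d2 \<in> D" "min y x < d2" "d2 < max y x" "\<bar>?G d2 - ?G y\<bar> < ?G y - v"
            using key[OF assms F DS dense y01 x01 xy[symmetric], of "?G y - v"] av by auto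
          have "?G d1 < v" "v < ?G d2" using d1(4) d2(4) by auto
          then obtain c where c: "c \<in> {min d1 d2..max d1 d2}" "?G c = v"
            using hyp d1(1) d2(1) by blast
          have "min x y \<in> J" "max x y \<in> J" using x y by (auto simp: min_def max_def)
          moreover have "min x y \<le> c" "c \<le> max x y" using c d1 d2 by auto
          ultimately have "c \<in> J" using J unfolding is_interval_1 by blast
          then show ?thesis using c by force
        qed
      qed
    qed
  qed
qed

end
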